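(* Let $K_1,\dots,K_m\subset\mathbb{R}^n$ be closed sets, each having the SOSH property at $\bar x\in K:=\bigcap_{l=1}^mK_l$, and suppose $\{K_l\}_{l=1}^m$ has linearly regular intersection at $\bar x$. Then $K$ has the SOSH property at $\bar x$.
   Context: For a closed set $C\subset\mathbb{R}^n$ and $\bar x\in C$, the regular normal cone is $\hat N_C(\bar x)=\{y:\langle y,x-\bar x\rangle\le o(\|x-\bar x\|)\text{ for all }x\in C\}$ and the limiting normal cone $N_C(\bar x)$ is the set of $y$ for which there exist $x_i\to\bar x$ with $x_i\in C$ and $y_i\in\hat N_C(x_i)$ with $y_i\to y$. A closed set $C$ has the SOSH property at $\bar x\in C$ if there exist $\delta>0$, $M>0$ such that $\langle v,x-\bar x\rangle\le M\|\bar x-x\|^2$ for all $x\in(\mathbb{B}(\bar x,\delta)\cap C)\setminus\{\bar x\}$ and all $v\in N_C(x)$ with $\|v\|=1$. Closed sets $K_1,\dots,K_m$ have linearly regular intersection at $x\in\bigcap_lK_l$ if $\sum_l v_l=0$ with $v_l\in N_{K_l}(x)$ implies $v_l=0$ for all $l$. *)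

theory Defs
  imports "HOL-Analysis.Analysis"
begin

definition regular_normal_cone :: "'a::euclidean_space set \<Rightarrow> 'a \<Rightarrow> 'a set" where
  "regular_normal_cone C xb = {y. xb \<in> C \<and>
     (\<forall>e>0. \<exists>d>0. \<forall>x\<in>C. norm (x - xb) < d \<longrightarrow> inner y (x - xb) \<le> e * norm (x - xb))}"

definition limiting_normal_cone :: "'a::euclidean_space set \<Rightarrow> 'a \<Rightarrow> 'a set" where
  "limiting_normal_cone C xb = {y. \<exists>xs ys. (\<forall>i. xs i \<in> C) \<and> xs \<longlonglongrightarrow> xb \<and>
     (\<forall>i. ys i \<in> regular_normal_cone C (xs i)) \<and> ys \<longlonglongrightarrow> y}"

definition SOSH :: "'a::euclidean_space set \<Rightarrow> 'a \<Rightarrow> bool" where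
  "SOSH C xb \<longleftrightarrow> (\<exists>d>0. \<exists>M>0. \<forall>x \<in> (cball xb d \<inter> C) - {xb}.
     \<forall>v \<in> limiting_normal_cone C x. norm v = 1 \<longrightarrow> inner v (x - xb) \<le> M * (norm (xb - x))\<^sup>2)"

definition linearly_regular_intersection ::
  "nat \<Rightarrow> (nat \<Rightarrow> 'a::euclidean_space set) \<Rightarrow> 'a \<Rightarrow> bool" where
  "linearly_regular_intersection m K x \<longleftrightarrow>
     (\<forall>v. (\<forall>l\<in>{1..m}. v l \<in> limiting_normal_cone (K l) x) \<and> (\<Sum>l=1..m. v l) = 0
        \<longrightarrow> (\<forall>l\<in>{1..m}. v l = 0))"

end

theory Submission
  imports Defs
begin


lemma reg_scale:
  assumes "y \<in> regular_normal_cone C p" "t \<ge> 0"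
  shows "t *\<^sub>R y \<in> regular_normal_cone C p"
proof -
  have pC: "p \<in> C" and H: "\<forall>e>0. \<exists>d>0. \<forall>x\<in>C. norm (x - p) < d \<longrightarrow> inner y (x - p) \<le> e * norm (x - p)"
    using assms(1) by (auto simp: regular_normal_cone_def)
  show ?thesis unfolding regular_normal_cone_def
  proof (intro CollectI conjI allI impI pC)
    fix e :: real assume e: "e > 0"
    show "\<exists>d>0. \<forall>x\<in>C. norm (x - p) < d \<longrightarrow> inner (t *\<^sub>R y) (x - p) \<le> e * norm (x - p)"
    proof (cases "t = 0")
      case True then show ?thesis using e by (intro exI[of _ 1]) auto
    next
      case False
      then have tp: "t > 0" using assms(2) by auto
      obtain d where d: "d > 0" "\<forall>x\<in>C. norm (x - p) < d \<longrightarrow> inner y (x - p) \<le> (e/t) * norm (x - p)"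
        using H e tp by (meson divide_pos_pos)
      show ?thesis
      proof (intro exI[of _ d] conjI ballI impI d(1))
        fix x assume "x \<in> C" "norm (x - p) < d"
        then have "inner y (x - p) \<le> (e/t) * norm (x - p)" using d by auto
        then have "t * inner y (x - p) \<le> t * ((e/t) * norm (x - p))" using tp by (intro mult_left_mono) auto
        then show "inner (t *\<^sub>R y) (x - p) \<le> e * norm (x - p)" using tp by simp
      qed
    qed
  qed
qed

lemma reg_lim:
  assumes "y \<in> regular_normal_cone C p"
  shows "y \<in> limiting_normal_cone C p"
proof -
  have "p \<in> C" using assms by (auto simp: regular_normal_cone_def)
  then show ?thesis unfolding limiting_normal_cone_def
    by (intro CollectI exI[of _ "\<lambda>i. p"] exI[of _ "\<lambda>i. y"]) (auto simp: assms)
qed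

lemma reg_mem: "y \<in> regular_normal_cone C p \<Longrightarrow> p \<in> C"
  by (auto simp: regular_normal_cone_def)

lemma prox_reg:
  fixes z p :: "'a::euclidean_space"
  assumes pA: "p \<in> A" and e0: "e0 > 0"
    and H: "\<And>y. y \<in> A \<Longrightarrow> norm (y - p) < e0 \<Longrightarrow> dist z p \<le> dist z y"
    and that: "k \<ge> 0"
  shows "(2 * k) *\<^sub>R (z - p) \<in> regular_normal_cone A p"
proof -
  have key: "2 * inner (z - p) (y - p) \<le> (norm (y - p))\<^sup>2" if "y \<in> A" "norm (y - p) < e0" for y
  proof -
    have "dist z p \<le> dist z y" using H that by auto
    then have "(norm (z - p))\<^sup>2 \<le> (norm (z - y))\<^sup>2" by (simp add: dist_norm power_mono)
    moreover have "z - y = (z - p) - (y - p)" by simp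
    then have "(norm (z - y))\<^sup>2 = (norm (z - p))\<^sup>2 - 2 * inner (z - p) (y - p) + (norm (y - p))\<^sup>2"
      by (simp only: power2_norm_eq_inner inner_diff_left inner_diff_right inner_commute) (simp add: inner_commute)
    ultimately show ?thesis by linarith
  qed
  have "2 *\<^sub>R (z - p) \<in> regular_normal_cone A p"
    unfolding regular_normal_cone_def
  proof (intro CollectI conjI allI impI pA)
    fix e :: real assume e: "e > 0"
    show "\<exists>d>0. \<forall>x\<in>A. norm (x - p) < d \<longrightarrow> inner (2 *\<^sub>R (z - p)) (x - p) \<le> e * norm (x - p)"
    proof (intro exI[of _ "min e0 e"] conjI ballI impI)
      show "min e0 e > 0" using e e0 by simp
      fix x assume x: "x \<in> A" "norm (x - p) < min e0 e"
      have "inner (2 *\<^sub>R (z - p)) (x - p) \<le> (norm (x - p))\<^sup>2" using key[of x] x by simp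
      also have "\<dots> = norm (x - p) * norm (x - p)" by (simp add: power2_eq_square)
      also have "\<dots> \<le> e * norm (x - p)" using x by (intro mult_right_mono) auto
      finally show "inner (2 *\<^sub>R (z - p)) (x - p) \<le> e * norm (x - p)" .
    qed
  qed
  from reg_scale[OF this that] show ?thesis by (simp add: mult.commute)
qed

lemma multi_subseq:
  fixes f :: "nat \<Rightarrow> nat \<Rightarrow> 'a::euclidean_space"
  assumes "finite I" "\<And>j l. l \<in> I \<Longrightarrow> norm (f j l) \<le> B"
  shows "\<exists>r g. strict_mono r \<and> (\<forall>l\<in>I. (\<lambda>j. f (r j) l) \<longlonglongrightarrow> g l)"
  using assms
proof (induction I rule: finite_induct)
  case empty show ?case using strict_mono_id by blast
next
  case (insert a I)
  then obtain r g where r: "strict_mono r" "\<forall>l\<in>I. (\<lambda>j. f (r j) l) \<longlonglongrightarrow> g l" by auto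
  have "bounded (range (\<lambda>j. f (r j) a))" using insert.prems by (auto simp: bounded_iff)
  then obtain ga s where s: "strict_mono s" "((\<lambda>j. f (r j) a) \<circ> s) \<longlonglongrightarrow> ga"
    using bounded_imp_convergent_subsequence by blast
  show ?case
  proof (intro exI conjI ballI)
    show "strict_mono (r \<circ> s)" using r s by (simp add: strict_mono_o)
    fix l assume l: "l \<in> insert a I"
    show "(\<lambda>j. f ((r \<circ> s) j) l) \<longlonglongrightarrow> (g(a:=ga)) l"
    proof (cases "l = a")
      case True then show ?thesis using s(2) by (simp add: o_def)
    next
      case False
      then have "l \<in> I" using l by auto
      from LIMSEQ_subseq_LIMSEQ[OF r(2)[rule_format, OF this] s(1)] False show ?thesis
        by (simp add: o_def)
    qed
  qed
qed



lemma norm_add_sq: "(norm (a + h))\<^sup>2 = (norm a)\<^sup>2 + 2 * inner a h + (norm (h::'a::real_inner))\<^sup>2"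
  by (simp add: power2_norm_eq_inner inner_add inner_commute algebra_simps)

lemma quad_min:
  fixes v x z :: "'a::real_inner" and y :: "nat \<Rightarrow> 'a"
  assumes fin: "finite I" and c: "c > 0" and k: "k \<ge> 0"
    and g: "g = (\<lambda>z'. c * (norm (z' - x))\<^sup>2 - inner v (z' - x) + k * (\<Sum>l\<in>I. (norm (y l - z'))\<^sup>2))"
    and min: "\<And>z'. g z \<le> g z'"
  shows "v = (2*c) *\<^sub>R (z - x) + (\<Sum>l\<in>I. (2*k) *\<^sub>R (z - y l))"
proof -
  define G where "G = (2*c) *\<^sub>R (z - x) + (\<Sum>l\<in>I. (2*k) *\<^sub>R (z - y l)) - v"
  define A where "A = c + k * card I"
  have Ap: "A > 0" using c k by (simp add: A_def add_pos_nonneg)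
  have id: "g (z + h) = g z + inner G h + A * (norm h)\<^sup>2" for h
  proof -
    have e1: "(norm (z + h - x))\<^sup>2 = (norm (z - x))\<^sup>2 + 2 * inner (z - x) h + (norm h)\<^sup>2"
      using norm_add_sq[of "z - x" h] by (simp add: algebra_simps)
    have e2: "(norm (y l - (z + h)))\<^sup>2 = (norm (y l - z))\<^sup>2 + 2 * inner (z - y l) h + (norm h)\<^sup>2" for l
      using norm_add_sq[of "y l - z" "-h"] by (simp add: algebra_simps inner_diff_left)
    have e3: "(\<Sum>l\<in>I. (norm (y l - (z + h)))\<^sup>2) = (\<Sum>l\<in>I. (norm (y l - z))\<^sup>2) + 2 * (\<Sum>l\<in>I. inner (z - y l) h) + card I * (norm h)\<^sup>2"
      by (simp only: e2 sum.distrib sum_distrib_left[symmetric] sum_constant)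
    have e4: "inner G h = 2 * c * inner (z - x) h + 2 * k * (\<Sum>l\<in>I. inner (z - y l) h) - inner v h"
      by (simp only: G_def inner_diff_left inner_add_left inner_sum_left sum_distrib_left inner_scaleR_left)
    have e5: "inner v (z + h - x) = inner v (z - x) + inner v h"
      by (simp add: inner_diff_right inner_add_right)
    define a0 where "a0 = (norm (z - x))\<^sup>2"
    define a1 where "a1 = inner (z - x) h"
    define nh where "nh = (norm h)\<^sup>2"
    define T where "T = (\<Sum>l\<in>I. inner (z - y l) h)"
    define S0 where "S0 = (\<Sum>l\<in>I. (norm (y l - z))\<^sup>2)"
    define iv where "iv = inner v h"
    define iv0 where "iv0 = inner v (z - x)"
    have "g (z + h) = c * (norm (z + h - x))\<^sup>2 - inner v (z + h - x) + k * (\<Sum>l\<in>I. (norm (y l - (z + h)))\<^sup>2)"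
      by (simp add: g)
    also have "\<dots> = c * (a0 + 2 * a1 + nh) - (iv0 + iv) + k * (S0 + 2 * T + card I * nh)"
      unfolding e1 e3 e5 a0_def a1_def nh_def T_def S0_def iv_def iv0_def by simp
    finally have g1: "g (z + h) = c * (a0 + 2 * a1 + nh) - (iv0 + iv) + k * (S0 + 2 * T + card I * nh)" .
    have g0: "g z = c * a0 - iv0 + k * S0" by (simp add: g a0_def iv0_def S0_def)
    have e4': "inner G h = 2 * c * a1 + 2 * k * T - iv" unfolding e4 a1_def T_def iv_def ..
    show ?thesis unfolding g1 g0 e4' A_def nh_def[symmetric] by (simp add: algebra_simps)
  qed
  define t where "t = 1 / (2 * A)"
  have tp: "t > 0" using Ap by (simp add: t_def)
  have "g z \<le> g (z + (- t) *\<^sub>R G)" by (rule min)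
  also have "\<dots> = g z + inner G ((- t) *\<^sub>R G) + A * (norm ((- t) *\<^sub>R G))\<^sup>2" by (rule id)
  finally have h0: "0 \<le> inner G ((- t) *\<^sub>R G) + A * (norm ((- t) *\<^sub>R G))\<^sup>2" by simp
  have h1: "inner G ((- t) *\<^sub>R G) = - t * (norm G)\<^sup>2" by (simp add: power2_norm_eq_inner)
  have h2: "(norm ((- t) *\<^sub>R G))\<^sup>2 = t\<^sup>2 * (norm G)\<^sup>2" by (simp add: power_mult_distrib)
  have "0 \<le> - t * (norm G)\<^sup>2 + A * t\<^sup>2 * (norm G)\<^sup>2" using h0 unfolding h1 h2 by (simp only: mult.assoc)
  moreover have "A * t\<^sup>2 = t / 2" using Ap by (simp add: t_def power2_eq_square field_simps)
  ultimately have "0 \<le> - (t/2) * (norm G)\<^sup>2" by (simp add: algebra_simps)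
  then have "(norm G)\<^sup>2 \<le> 0" using tp by (simp add: mult_le_0_iff)
  then have "G = 0" by simp
  then show ?thesis by (simp add: G_def)
qed

lemma lr_bound:
  fixes K :: "nat \<Rightarrow> 'a::euclidean_space set"
  assumes lr: "linearly_regular_intersection m K xb"
  shows "\<exists>\<delta>>0. \<exists>C>0. \<forall>y w. (\<forall>l\<in>{1..m}. y l \<in> K l \<and> norm (y l - xb) \<le> \<delta> \<and> w l \<in> regular_normal_cone (K l) (y l))
     \<longrightarrow> (\<Sum>l=1..m. norm (w l)) \<le> C * norm (\<Sum>l=1..m. w l)"
proof (rule ccontr)
  let ?I = "{1..m}"
  assume neg: "\<not> ?thesis"
  have "\<forall>j::nat. \<exists>y w. (\<forall>l\<in>?I. y l \<in> K l \<and> norm (y l - xb) \<le> 1 / real (Suc j) \<and> w l \<in> regular_normal_cone (K l) (y l))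
     \<and> real (Suc j) * norm (\<Sum>l\<in>?I. w l) < (\<Sum>l\<in>?I. norm (w l))"
  proof
    fix j :: nat
    have "1 / real (Suc j) > 0" "real (Suc j) > 0" by auto
    then show "\<exists>y w. (\<forall>l\<in>?I. y l \<in> K l \<and> norm (y l - xb) \<le> 1 / real (Suc j) \<and> w l \<in> regular_normal_cone (K l) (y l))
     \<and> real (Suc j) * norm (\<Sum>l\<in>?I. w l) < (\<Sum>l\<in>?I. norm (w l))"
      using neg by (meson not_le)
  qed
  then obtain Y W where YW: "\<And>j. (\<forall>l\<in>?I. Y j l \<in> K l \<and> norm (Y j l - xb) \<le> 1 / real (Suc j) \<and> W j l \<in> regular_normal_cone (K l) (Y j l))
     \<and> real (Suc j) * norm (\<Sum>l\<in>?I. W j l) < (\<Sum>l\<in>?I. norm (W j l))"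
    by metis
  define s where "s j = (\<Sum>l\<in>?I. norm (W j l))" for j
  have sp: "s j > 0" for j
  proof -
    have "0 \<le> real (Suc j) * norm (\<Sum>l\<in>?I. W j l)" by simp
    then show ?thesis using YW[of j] unfolding s_def by linarith
  qed
  define W' where "W' j l = (1 / s j) *\<^sub>R W j l" for j l
  have W'reg: "W' j l \<in> regular_normal_cone (K l) (Y j l)" if "l \<in> ?I" for j l
    unfolding W'_def using YW[of j] that sp[of j] by (intro reg_scale) auto
  have W'sum: "(\<Sum>l\<in>?I. norm (W' j l)) = 1" for j
    using sp[of j] by (simp add: W'_def sum_divide_distrib[symmetric] s_def)
  have W'small: "norm (\<Sum>l\<in>?I. W' j l) < 1 / real (Suc j)" for j
  proof -
    have "(\<Sum>l\<in>?I. W' j l) = (1 / s j) *\<^sub>R (\<Sum>l\<in>?I. W j l)" by (simp add: W'_def scaleR_sum_right)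
    then have "norm (\<Sum>l\<in>?I. W' j l) = norm (\<Sum>l\<in>?I. W j l) / s j" using sp[of j] by simp
    also have "\<dots> < 1 / real (Suc j)" using YW[of j] sp[of j] by (simp add: s_def field_simps)
    finally show ?thesis .
  qed
  have W'bd: "norm (W' j l) \<le> 1" if "l \<in> ?I" for j l
  proof -
    have "norm (W' j l) \<le> (\<Sum>l\<in>?I. norm (W' j l))" using that by (intro member_le_sum) auto
    then show ?thesis using W'sum by simp
  qed
  obtain r g where r: "strict_mono r" "\<forall>l\<in>?I. (\<lambda>j. W' (r j) l) \<longlonglongrightarrow> g l"
    using multi_subseq[of ?I W' 1] W'bd by auto
  have inv0: "(\<lambda>j. 1 / real (Suc (r j))) \<longlonglongrightarrow> 0"
    using LIMSEQ_subseq_LIMSEQ[OF LIMSEQ_inverse_real_of_nat r(1)] by (simp add: o_def inverse_eq_divide)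
  have Ylim: "(\<lambda>j. Y (r j) l) \<longlonglongrightarrow> xb" if "l \<in> ?I" for l
  proof -
    have "(\<lambda>j. Y (r j) l - xb) \<longlonglongrightarrow> 0"
      by (rule Lim_null_comparison[OF _ inv0]) (use YW that in auto)
    then show ?thesis by (simp add: LIM_zero_iff)
  qed
  have glim: "g l \<in> limiting_normal_cone (K l) xb" if "l \<in> ?I" for l
    unfolding limiting_normal_cone_def
    using YW W'reg that Ylim r(2) by (intro CollectI exI[of _ "\<lambda>j. Y (r j) l"] exI[of _ "\<lambda>j. W' (r j) l"]) auto
  have "(\<lambda>j. \<Sum>l\<in>?I. W' (r j) l) \<longlonglongrightarrow> (\<Sum>l\<in>?I. g l)"
    using r(2) by (intro tendsto_sum) auto
  moreover have "(\<lambda>j. \<Sum>l\<in>?I. W' (r j) l) \<longlonglongrightarrow> 0"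
    by (rule Lim_null_comparison[OF _ inv0], rule always_eventually, rule allI, rule less_imp_le, rule W'small)
  ultimately have g0: "(\<Sum>l\<in>?I. g l) = 0" using LIMSEQ_unique by blast
  have "(\<lambda>j. \<Sum>l\<in>?I. norm (W' (r j) l)) \<longlonglongrightarrow> (\<Sum>l\<in>?I. norm (g l))"
    using r(2) by (intro tendsto_sum tendsto_norm) auto
  then have g1: "(\<Sum>l\<in>?I. norm (g l)) = 1" using W'sum by (simp add: LIMSEQ_const_iff)
  from lr glim g0 have "\<forall>l\<in>?I. g l = 0" unfolding linearly_regular_intersection_def by blast
  then have "(\<Sum>l\<in>?I. norm (g l)) = 0" by simp
  with g1 show False by simp
qed



lemma approx_rule:
  fixes K :: "nat \<Rightarrow> 'a::euclidean_space set" and x v :: 'a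
  assumes fin: "finite I" and cl: "\<And>l. l \<in> I \<Longrightarrow> closed (K l)"
    and v: "v \<in> regular_normal_cone (\<Inter>l\<in>I. K l) x" and nv: "norm v = 1" and th: "\<theta> > 0"
  shows "\<exists>y w. (\<forall>l\<in>I. y l \<in> K l \<and> norm (y l - x) \<le> \<theta> \<and> w l \<in> regular_normal_cone (K l) (y l))
            \<and> norm (v - (\<Sum>l\<in>I. w l)) \<le> \<theta>"
proof -
  have xK: "x \<in> (\<Inter>l\<in>I. K l)" using reg_mem[OF v] .
  define \<eta> where "\<eta> = \<theta> / 4"
  have \<eta>: "\<eta> > 0" using th by (simp add: \<eta>_def)
  obtain \<delta>1 where \<delta>1: "\<delta>1 > 0" "\<forall>z\<in>(\<Inter>l\<in>I. K l). norm (z - x) < \<delta>1 \<longrightarrow> inner v (z - x) \<le> \<eta> * norm (z - x)"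
    using v \<eta> unfolding regular_normal_cone_def by blast
  define \<delta> where "\<delta> = min 1 (\<delta>1 / 2)"
  have \<delta>: "\<delta> > 0" "\<delta> \<le> 1" "\<delta> < \<delta>1" using \<delta>1 by (auto simp: \<delta>_def)
  define c where "c = 4 / \<delta>"
  have c4: "c \<ge> 4" using \<delta> by (simp add: c_def field_simps)
  have cpos: "c > 0" using c4 by simp
  have c2: "2 / c < \<delta>" "1 / c \<le> \<delta>" using \<delta> by (simp_all add: c_def field_simps)
  define S where "S l = K l \<inter> cball x \<delta>" for l
  have Scl: "closed (S l)" if "l \<in> I" for l using cl[OF that] by (simp add: S_def closed_Int)
  have xS: "x \<in> S l" if "l \<in> I" for l using xK that \<delta> by (auto simp: S_def)
  have Sne: "S l \<noteq> {}" if "l \<in> I" for l using xS[OF that] by auto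
  define D where "D l z = infdist z (S l)" for l z
  define \<rho> where "\<rho> = min (\<theta> / (2 * c)) (\<theta> / 2)"
  have \<rho>: "\<rho> > 0" using th cpos by (simp add: \<rho>_def)
  have \<eta>c: "\<eta> / c < \<rho>" using th c4 by (simp add: \<rho>_def \<eta>_def field_simps)
  have \<rho>1: "\<rho> \<le> \<theta> / (2 * c)" "\<rho> \<le> \<theta> / 2" by (auto simp: \<rho>_def)
  have \<rho>\<theta>: "2 * c * \<rho> \<le> \<theta>" "2 * \<rho> \<le> \<theta>"
  proof -
    have "2 * c * \<rho> \<le> 2 * c * (\<theta> / (2 * c))" using \<rho>1 cpos by (intro mult_left_mono) auto
    then show "2 * c * \<rho> \<le> \<theta>" using cpos by simp
    show "2 * \<rho> \<le> \<theta>" using \<rho>1 by simp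
  qed
  define \<phi> where "\<phi> z = c * (norm (z - x))\<^sup>2 - inner v (z - x)" for z
  define \<psi> where "\<psi> z = (\<Sum>l\<in>I. (D l z)\<^sup>2)" for z
  have cs: "inner v (z - x) \<le> norm (z - x)" for z
    using norm_cauchy_schwarz[of v "z - x"] nv by simp
  have \<psi>0: "\<psi> z \<ge> 0" for z by (simp add: \<psi>_def sum_nonneg)
  have cont\<phi>: "continuous_on U \<phi>" for U unfolding \<phi>_def by (intro continuous_intros)
  have cont\<psi>: "continuous_on U \<psi>" for U unfolding \<psi>_def D_def by (intro continuous_intros)
  define A where "A = cball x (1 / c) - ball x \<rho>"
  have cA: "compact A" unfolding A_def by (intro compact_diff compact_cball open_ball)
  have pos: "0 < max (\<phi> z) (\<psi> z)" if zA: "z \<in> A" for z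
  proof (cases "\<psi> z = 0")
    case True
    have n: "\<rho> \<le> norm (z - x)" "norm (z - x) \<le> 1 / c"
      using zA by (auto simp: A_def dist_norm norm_minus_commute)
    have "\<forall>l\<in>I. (D l z)\<^sup>2 = 0" using True fin unfolding \<psi>_def by (subst (asm) sum_nonneg_eq_0_iff) auto
    then have "\<forall>l\<in>I. z \<in> S l" using Scl Sne by (auto simp: D_def in_closed_iff_infdist_zero)
    then have zK: "z \<in> (\<Inter>l\<in>I. K l)" and zc: "norm (z - x) \<le> \<delta>"
      using n c2 by (auto simp: S_def)
    have "inner v (z - x) \<le> \<eta> * norm (z - x)" using \<delta>1(2) zK zc \<delta> by auto
    moreover have "\<eta> < c * norm (z - x)"
    proof -
      have "\<eta> < \<rho> * c" using \<eta>c cpos by (simp add: field_simps)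
      also have "\<dots> \<le> norm (z - x) * c" using n cpos by (intro mult_right_mono) auto
      finally show ?thesis by (simp add: mult.commute)
    qed
    moreover have "norm (z - x) > 0" using n \<rho> by linarith
    ultimately have "\<eta> * norm (z - x) < c * norm (z - x) * norm (z - x)"
      by (intro mult_strict_right_mono) auto
    then have "\<phi> z > 0" using \<open>inner v (z - x) \<le> \<eta> * norm (z - x)\<close>
      by (simp add: \<phi>_def power2_eq_square mult.assoc)
    then show ?thesis by simp
  next
    case False then show ?thesis using \<psi>0[of z] by simp
  qed
  obtain \<mu> where \<mu>: "\<mu> > 0" "\<And>z. z \<in> A \<Longrightarrow> \<mu> \<le> max (\<phi> z) (\<psi> z)"
  proof (cases "A = {}")
    case True then show ?thesis using that[of 1] by auto
  next
    case False
    have "continuous_on A (\<lambda>z. max (\<phi> z) (\<psi> z))" using cont\<phi> cont\<psi> by (intro continuous_on_max)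
    then obtain z0 where "z0 \<in> A" "\<forall>z\<in>A. max (\<phi> z0) (\<psi> z0) \<le> max (\<phi> z) (\<psi> z)"
      using continuous_attains_inf[OF cA False] by blast
    then show ?thesis using that[of "max (\<phi> z0) (\<psi> z0)"] pos by auto
  qed
  define k where "k = 1 / (c * \<mu>) + 1"
  have kpos: "k > 0" using cpos \<mu> by (simp add: k_def add_pos_pos)
  have k\<mu>: "k * \<mu> > 1 / c" using cpos \<mu> by (simp add: k_def field_simps)
  define F where "F z = \<phi> z + k * \<psi> z" for z
  have F\<phi>: "\<phi> z \<le> F z" for z using kpos \<psi>0[of z] by (simp add: F_def)
  have Fx: "F x = 0" using xS by (simp add: F_def \<phi>_def \<psi>_def D_def)
  obtain z where zmin: "\<And>z'. F z \<le> F z'"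
  proof -
    have "continuous_on (cball x (2 / c)) F" unfolding F_def using cont\<phi> cont\<psi> by (intro continuous_intros)
    moreover have "cball x (2 / c) \<noteq> {}" using cpos by auto
    ultimately obtain z0 where z0: "z0 \<in> cball x (2 / c)" "\<forall>y\<in>cball x (2 / c). F z0 \<le> F y"
      using continuous_attains_inf[OF compact_cball] by blast
    have "F z0 \<le> F x" using z0 cpos by auto
    have "F z0 \<le> F z'" for z'
    proof (cases "z' \<in> cball x (2 / c)")
      case True then show ?thesis using z0 by auto
    next
      case False
      then have n: "norm (z' - x) > 2 / c" by (auto simp: dist_norm norm_minus_commute)
      then have "c * norm (z' - x) > 2" using cpos by (simp add: field_simps)
      then have "norm (z' - x) < c * norm (z' - x) * norm (z' - x)"
      proof -
        have np: "norm (z' - x) > 0" using n cpos by (smt (verit) divide_pos_pos)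
        have "1 * norm (z' - x) < c * norm (z' - x) * norm (z' - x)"
          using \<open>c * norm (z' - x) > 2\<close> np by (intro mult_strict_right_mono) auto
        then show ?thesis by simp
      qed
      then have "\<phi> z' > 0" using cs[of z'] by (simp add: \<phi>_def power2_eq_square mult.assoc)
      then show ?thesis using F\<phi>[of z'] \<open>F z0 \<le> F x\<close> Fx by linarith
    qed
    then show ?thesis using that by blast
  qed
  have Fz: "F z \<le> 0" using zmin[of x] Fx by simp
  have \<phi>z: "\<phi> z \<le> - (k * \<psi> z)" using Fz by (simp add: F_def)
  have \<phi>z0: "\<phi> z \<le> 0" using \<phi>z kpos \<psi>0[of z] by (smt (verit) mult_nonneg_nonneg)
  have nzx: "norm (z - x) \<le> 1 / c"
  proof (cases "norm (z - x) = 0")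
    case False
    have "c * norm (z - x) * norm (z - x) \<le> 1 * norm (z - x)"
      using \<phi>z0 cs[of z] by (simp add: \<phi>_def power2_eq_square mult.assoc)
    then have "c * norm (z - x) \<le> 1" using False by (simp add: mult_le_cancel_right)
    then show ?thesis using cpos by (simp add: field_simps)
  qed (use cpos in simp)
  have nz\<rho>: "norm (z - x) < \<rho>"
  proof (rule ccontr)
    assume "\<not> ?thesis"
    then have "z \<in> A" using nzx by (auto simp: A_def dist_norm norm_minus_commute)
    then have "\<mu> \<le> max (\<phi> z) (\<psi> z)" by (rule \<mu>(2))
    then have "\<mu> \<le> \<psi> z" using \<phi>z0 \<mu>(1) by linarith
    then have "k * \<mu> \<le> k * \<psi> z" using kpos by simp
    also have "\<dots> \<le> - \<phi> z" using \<phi>z by simp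
    also have "\<dots> \<le> inner v (z - x)" using cpos by (simp add: \<phi>_def)
    also have "\<dots> \<le> 1 / c" using cs[of z] nzx by simp
    finally show False using k\<mu> by simp
  qed
  have "\<forall>l\<in>I. \<exists>p. p \<in> S l \<and> D l z = dist z p"
    using infdist_attains_inf[OF Scl Sne] unfolding D_def by metis
  then obtain y where y: "\<And>l. l \<in> I \<Longrightarrow> y l \<in> S l" "\<And>l. l \<in> I \<Longrightarrow> D l z = dist z (y l)"
    by metis
  have Dle: "D l z \<le> norm (z - x)" if "l \<in> I" for l
    using infdist_le[OF xS[OF that], of z] by (simp add: D_def dist_norm)
  have yx: "norm (y l - x) \<le> 2 * norm (z - x)" if "l \<in> I" for l
  proof -
    have "norm (y l - x) \<le> norm (y l - z) + norm (z - x)" using norm_triangle_ineq[of "y l - z" "z - x"] by simp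
    also have "norm (y l - z) = D l z" using y(2)[OF that] by (simp add: dist_norm norm_minus_commute)
    finally show ?thesis using Dle[OF that] by simp
  qed
  have y\<delta>: "norm (y l - x) < \<delta>" if "l \<in> I" for l using yx[OF that] nzx c2 by simp
  have y\<theta>: "norm (y l - x) \<le> \<theta>" if "l \<in> I" for l using yx[OF that] nz\<rho> \<rho>\<theta> by simp
  define g where "g = (\<lambda>z'. c * (norm (z' - x))\<^sup>2 - inner v (z' - x) + k * (\<Sum>l\<in>I. (norm (y l - z'))\<^sup>2))"
  have gF: "F z' \<le> g z'" for z'
  proof -
    have "(D l z')\<^sup>2 \<le> (norm (y l - z'))\<^sup>2" if "l \<in> I" for l
      using infdist_le[OF y(1)[OF that], of z'] infdist_nonneg[of z' "S l"]
      by (intro power_mono) (auto simp: D_def dist_norm norm_minus_commute)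
    then have "\<psi> z' \<le> (\<Sum>l\<in>I. (norm (y l - z'))\<^sup>2)" unfolding \<psi>_def by (intro sum_mono) auto
    then show ?thesis using kpos by (simp add: F_def g_def \<phi>_def)
  qed
  have gz: "g z = F z"
  proof -
    have "\<psi> z = (\<Sum>l\<in>I. (norm (y l - z))\<^sup>2)" unfolding \<psi>_def
      using y(2) by (intro sum.cong) (auto simp: dist_norm norm_minus_commute)
    then show ?thesis by (simp add: F_def g_def \<phi>_def)
  qed
  have gmin: "g z \<le> g z'" for z' using gz zmin[of z'] gF[of z'] by simp
  have veq: "v = (2*c) *\<^sub>R (z - x) + (\<Sum>l\<in>I. (2*k) *\<^sub>R (z - y l))"
    by (rule quad_min[OF fin cpos less_imp_le[OF kpos] g_def gmin])
  define w where "w l = (2*k) *\<^sub>R (z - y l)" for l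
  have wreg: "w l \<in> regular_normal_cone (K l) (y l)" if l: "l \<in> I" for l
    unfolding w_def
  proof (rule prox_reg)
    show "y l \<in> K l" using y(1)[OF l] by (simp add: S_def)
    show "\<delta> - norm (y l - x) > 0" using y\<delta>[OF l] by simp
    show "0 \<le> k" using kpos by simp
    fix y' assume y': "y' \<in> K l" "norm (y' - y l) < \<delta> - norm (y l - x)"
    have "norm (y' - x) \<le> norm (y' - y l) + norm (y l - x)" using norm_triangle_ineq[of "y' - y l" "y l - x"] by simp
    then have "y' \<in> S l" using y' by (auto simp: S_def dist_norm norm_minus_commute)
    then show "dist z (y l) \<le> dist z y'" using y(2)[OF l] infdist_le[of y' "S l" z] by (simp add: D_def)
  qed
  have "v - (\<Sum>l\<in>I. w l) = (2*c) *\<^sub>R (z - x)" using veq by (simp add: w_def)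
  then have "norm (v - (\<Sum>l\<in>I. w l)) = 2 * c * norm (z - x)" using cpos by simp
  also have "\<dots> \<le> 2 * c * \<rho>" using nz\<rho> cpos by simp
  finally have "norm (v - (\<Sum>l\<in>I. w l)) \<le> \<theta>" using \<rho>\<theta> by simp
  moreover have "\<forall>l\<in>I. y l \<in> K l \<and> norm (y l - x) \<le> \<theta> \<and> w l \<in> regular_normal_cone (K l) (y l)"
    using y(1) y\<theta> wreg by (auto simp: S_def)
  ultimately show ?thesis by blast
qed



lemma sosh_reg:
  assumes "SOSH C xb"
  shows "\<exists>d>0. \<exists>M>0. \<forall>y\<in>C. norm (y - xb) \<le> d \<longrightarrow>
           (\<forall>w\<in>regular_normal_cone C y. inner w (y - xb) \<le> M * norm w * (norm (y - xb))\<^sup>2)"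
proof -
  obtain d M where dM: "d > 0" "M > 0" "\<forall>x \<in> (cball xb d \<inter> C) - {xb}.
     \<forall>v \<in> limiting_normal_cone C x. norm v = 1 \<longrightarrow> inner v (x - xb) \<le> M * (norm (xb - x))\<^sup>2"
    using assms unfolding SOSH_def by blast
  have "inner w (y - xb) \<le> M * norm w * (norm (y - xb))\<^sup>2"
    if y: "y \<in> C" "norm (y - xb) \<le> d" and w: "w \<in> regular_normal_cone C y" for y w
  proof (cases "w = 0 \<or> y = xb")
    case True then show ?thesis by auto
  next
    case False
    define u where "u = (1 / norm w) *\<^sub>R w"
    have "u \<in> regular_normal_cone C y" unfolding u_def by (rule reg_scale[OF w]) simp
    then have ul: "u \<in> limiting_normal_cone C y" by (rule reg_lim)
    have nu: "norm u = 1" using False by (simp add: u_def)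
    have "y \<in> (cball xb d \<inter> C) - {xb}" using y False by (auto simp: dist_norm norm_minus_commute)
    then have "inner u (y - xb) \<le> M * (norm (xb - y))\<^sup>2" using dM(3) ul nu by blast
    then have "norm w * inner u (y - xb) \<le> norm w * (M * (norm (y - xb))\<^sup>2)"
      by (simp add: norm_minus_commute mult_left_mono)
    moreover have "norm w * inner u (y - xb) = inner w (y - xb)" using False by (simp add: u_def)
    ultimately show ?thesis by (simp add: algebra_simps)
  qed
  then show ?thesis using dM(1,2) by blast
qed

theorem proposition4p4:
  fixes K :: "nat \<Rightarrow> 'a::euclidean_space set" and m :: nat and xb :: 'a
  assumes "\<And>l. l \<in> {1..m} \<Longrightarrow> closed (K l)"
    and "xb \<in> (\<Inter>l\<in>{1..m}. K l)"
    and "\<And>l. l \<in> {1..m} \<Longrightarrow> SOSH (K l) xb"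
    and "linearly_regular_intersection m K xb"
  shows "SOSH (\<Inter>l\<in>{1..m}. K l) xb"
proof -
  let ?I = "{1..m}"
  let ?KK = "\<Inter>l\<in>{1..m}. K l"
  have fin: "finite ?I" by simp
  have "\<forall>l\<in>?I. \<exists>d>0. \<exists>M>0. \<forall>y\<in>K l. norm (y - xb) \<le> d \<longrightarrow>
           (\<forall>w\<in>regular_normal_cone (K l) y. inner w (y - xb) \<le> M * norm w * (norm (y - xb))\<^sup>2)"
    using assms(3) sosh_reg by blast
  then obtain d M where dM: "\<And>l. l \<in> ?I \<Longrightarrow> d l > 0" "\<And>l. l \<in> ?I \<Longrightarrow> M l > 0"
    "\<And>l y w. l \<in> ?I \<Longrightarrow> y \<in> K l \<Longrightarrow> norm (y - xb) \<le> d l \<Longrightarrow> w \<in> regular_normal_cone (K l) y \<Longrightarrow>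
        inner w (y - xb) \<le> M l * norm w * (norm (y - xb))\<^sup>2"
    by metis
  obtain \<delta>0 C where \<delta>0C: "\<delta>0 > 0" "C > 0" "\<And>y w. (\<forall>l\<in>?I. y l \<in> K l \<and> norm (y l - xb) \<le> \<delta>0 \<and> w l \<in> regular_normal_cone (K l) (y l))
     \<Longrightarrow> (\<Sum>l=1..m. norm (w l)) \<le> C * norm (\<Sum>l=1..m. w l)"
    using lr_bound[OF assms(4)] by blast
  define ds where "ds = Min (insert \<delta>0 (d ` ?I))"
  have ds3: "ds \<le> d l" if "l \<in> ?I" for l unfolding ds_def using that by (intro Min_le) auto
  have ds: "ds > 0" "ds \<le> \<delta>0" "\<And>l. l \<in> ?I \<Longrightarrow> ds \<le> d l"
    using \<delta>0C(1) dM(1) ds3 by (auto simp: ds_def Min_gr_iff)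
  define Ms where "Ms = Max (insert 1 (M ` ?I))"
  have Ms2: "M l \<le> Ms" if "l \<in> ?I" for l unfolding Ms_def using that by (intro Max_ge) auto
  have Ms: "Ms \<ge> 1" "\<And>l. l \<in> ?I \<Longrightarrow> M l \<le> Ms"
    using Ms2 by (auto simp: Ms_def)
  have R: "inner v (x - xb) \<le> 2 * C * Ms * (norm (x - xb))\<^sup>2"
    if x: "x \<in> ?KK" "norm (x - xb) \<le> ds / 2" and v: "v \<in> regular_normal_cone ?KK x" "norm v = 1" for x v
  proof -
    define a where "a = norm (x - xb)"
    define E where "E = a + 2 * C + 2 * C * Ms * (2 * a + 1)"
    have a0: "a \<ge> 0" by (simp add: a_def)
    have E0: "E \<ge> 0" using a0 \<delta>0C(2) Ms by (simp add: E_def)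
    have key: "inner v (x - xb) \<le> 2 * C * Ms * a\<^sup>2 + \<theta> * E"
      if th: "0 < \<theta>" "\<theta> \<le> 1" "\<theta> \<le> ds / 2" for \<theta>
    proof -
      obtain y w where yw: "\<forall>l\<in>?I. y l \<in> K l \<and> norm (y l - x) \<le> \<theta> \<and> w l \<in> regular_normal_cone (K l) (y l)"
        "norm (v - (\<Sum>l\<in>?I. w l)) \<le> \<theta>"
        using approx_rule[OF fin assms(1) v th(1)] by blast
      have yxb: "norm (y l - xb) \<le> a + \<theta>" if "l \<in> ?I" for l
      proof -
        have "norm (y l - x) \<le> \<theta>" using yw(1) that by auto
        then show ?thesis using norm_triangle_ineq[of "y l - x" "x - xb"] by (simp add: a_def)
      qed
      have yds: "norm (y l - xb) \<le> ds" if "l \<in> ?I" for l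
        using yxb[OF that] x(2) th(3) by (simp add: a_def)
      define Sw where "Sw = (\<Sum>l\<in>?I. norm (w l))"
      have Sw0: "Sw \<ge> 0" by (simp add: Sw_def sum_nonneg)
      have "Sw \<le> C * norm (\<Sum>l\<in>?I. w l)"
        unfolding Sw_def
      proof (rule \<delta>0C(3)[of y])
        show "\<forall>l\<in>?I. y l \<in> K l \<and> norm (y l - xb) \<le> \<delta>0 \<and> w l \<in> regular_normal_cone (K l) (y l)"
          using yw(1) yds ds(2) by (meson order_trans)
      qed
      also have "norm (\<Sum>l\<in>?I. w l) \<le> 2"
        using norm_triangle_ineq[of v "(\<Sum>l\<in>?I. w l) - v"] yw(2) v(2) th(2)
        by (simp add: norm_minus_commute)
      then have "C * norm (\<Sum>l\<in>?I. w l) \<le> C * 2" using \<delta>0C(2) by (intro mult_left_mono) auto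
      finally have SwC: "Sw \<le> 2 * C" by simp
      have dec: "inner v (x - xb) = inner (v - (\<Sum>l\<in>?I. w l)) (x - xb)
          + (\<Sum>l\<in>?I. inner (w l) (x - y l)) + (\<Sum>l\<in>?I. inner (w l) (y l - xb))"
      proof -
        have "(\<Sum>l\<in>?I. inner (w l) (x - y l)) + (\<Sum>l\<in>?I. inner (w l) (y l - xb)) = (\<Sum>l\<in>?I. inner (w l) (x - xb))"
          by (simp add: sum.distrib[symmetric] inner_diff_right)
        then show ?thesis by (simp add: inner_diff_left inner_sum_left)
      qed
      have t1: "inner (v - (\<Sum>l\<in>?I. w l)) (x - xb) \<le> \<theta> * a"
      proof -
        have "inner (v - (\<Sum>l\<in>?I. w l)) (x - xb) \<le> norm (v - (\<Sum>l\<in>?I. w l)) * a"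
          using norm_cauchy_schwarz by (simp add: a_def)
        also have "\<dots> \<le> \<theta> * a" using yw(2) a0 by (intro mult_right_mono) auto
        finally show ?thesis .
      qed
      have t2: "(\<Sum>l\<in>?I. inner (w l) (x - y l)) \<le> \<theta> * Sw"
      proof -
        have "(\<Sum>l\<in>?I. inner (w l) (x - y l)) \<le> (\<Sum>l\<in>?I. norm (w l) * \<theta>)"
        proof (intro sum_mono)
          fix l assume l: "l \<in> ?I"
          have "inner (w l) (x - y l) \<le> norm (w l) * norm (x - y l)" by (rule norm_cauchy_schwarz)
          also have "\<dots> \<le> norm (w l) * \<theta>" using yw(1) l by (intro mult_left_mono) (auto simp: norm_minus_commute)
          finally show "inner (w l) (x - y l) \<le> norm (w l) * \<theta>" .
        qed
        then show ?thesis by (simp add: Sw_def sum_distrib_left mult.commute)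
      qed
      have t3: "(\<Sum>l\<in>?I. inner (w l) (y l - xb)) \<le> Ms * (a + \<theta>)\<^sup>2 * Sw"
      proof -
        have "(\<Sum>l\<in>?I. inner (w l) (y l - xb)) \<le> (\<Sum>l\<in>?I. Ms * (a + \<theta>)\<^sup>2 * norm (w l))"
        proof (intro sum_mono)
          fix l assume l: "l \<in> ?I"
          have "inner (w l) (y l - xb) \<le> M l * norm (w l) * (norm (y l - xb))\<^sup>2"
            using dM(3)[OF l] yw(1) l yds[OF l] ds(3)[OF l] by auto
          also have "\<dots> \<le> Ms * norm (w l) * (a + \<theta>)\<^sup>2"
            using Ms(2)[OF l] dM(2)[OF l] yxb[OF l]
            by (intro mult_mono power_mono) auto
          finally show "inner (w l) (y l - xb) \<le> Ms * (a + \<theta>)\<^sup>2 * norm (w l)" by (simp add: algebra_simps)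
        qed
        then show ?thesis by (simp add: Sw_def sum_distrib_left)
      qed
      have sq: "(a + \<theta>)\<^sup>2 \<le> a\<^sup>2 + \<theta> * (2 * a + 1)"
      proof -
        have "\<theta>\<^sup>2 \<le> \<theta>" using th by (simp add: power2_eq_square mult_le_cancel_left1)
        then show ?thesis by (simp add: power2_eq_square algebra_simps)
      qed
      have "Ms * (a + \<theta>)\<^sup>2 * Sw \<le> Ms * (a\<^sup>2 + \<theta> * (2 * a + 1)) * (2 * C)"
        using Ms(1) sq SwC Sw0 a0 th(1) by (intro mult_mono) auto
      moreover have "\<theta> * Sw \<le> \<theta> * (2 * C)" using SwC th by (intro mult_left_mono) auto
      ultimately have "inner v (x - xb) \<le> \<theta> * a + \<theta> * (2 * C) + Ms * (a\<^sup>2 + \<theta> * (2 * a + 1)) * (2 * C)"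
        using dec t1 t2 t3 by linarith
      also have "\<dots> = 2 * C * Ms * a\<^sup>2 + \<theta> * E" by (simp add: E_def algebra_simps)
      finally show ?thesis .
    qed
    have "inner v (x - xb) \<le> 2 * C * Ms * a\<^sup>2"
    proof (rule field_le_epsilon)
      fix e :: real assume e: "0 < e"
      define \<theta> where "\<theta> = min (min 1 (ds / 2)) (e / (E + 1))"
      have t1: "\<theta> \<le> min 1 (ds / 2)" unfolding \<theta>_def by (rule min.cobounded1)
      have th: "0 < \<theta>" "\<theta> \<le> 1" "\<theta> \<le> ds / 2"
        using e ds(1) E0 t1 by (auto simp: \<theta>_def)
      have "\<theta> * E \<le> (e / (E + 1)) * E" using E0 by (intro mult_right_mono) (auto simp: \<theta>_def)
      also have "\<dots> \<le> e" using E0 e by (simp add: field_simps)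
      finally show "inner v (x - xb) \<le> 2 * C * Ms * a\<^sup>2 + e" using key[OF th] by linarith
    qed
    then show ?thesis by (simp add: a_def)
  qed
  have main: "\<forall>x \<in> (cball xb (ds / 4) \<inter> ?KK) - {xb}. \<forall>v \<in> limiting_normal_cone ?KK x.
      norm v = 1 \<longrightarrow> inner v (x - xb) \<le> (2 * C * Ms) * (norm (xb - x))\<^sup>2"
  proof (intro ballI impI)
    fix x v assume x: "x \<in> (cball xb (ds / 4) \<inter> ?KK) - {xb}" and v: "v \<in> limiting_normal_cone ?KK x"
      and nv: "norm v = 1"
    obtain xs ys where s: "\<forall>i. xs i \<in> ?KK" "xs \<longlonglongrightarrow> x" "\<forall>i. ys i \<in> regular_normal_cone ?KK (xs i)" "ys \<longlonglongrightarrow> v"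
      using v unfolding limiting_normal_cone_def by blast
    have ev1: "eventually (\<lambda>i. norm (xs i - xb) \<le> ds / 2) sequentially"
    proof -
      have "eventually (\<lambda>i. dist (xs i) x < ds / 4) sequentially" using s(2) ds(1)
        unfolding tendsto_iff by (meson zero_less_divide_iff zero_less_numeral)
      then show ?thesis
      proof (rule eventually_mono)
        fix i assume "dist (xs i) x < ds / 4"
        moreover have "norm (xs i - xb) \<le> norm (xs i - x) + norm (x - xb)"
          using norm_triangle_ineq[of "xs i - x" "x - xb"] by simp
        moreover have "norm (x - xb) \<le> ds / 4" using x by (auto simp: dist_norm norm_minus_commute)
        ultimately show "norm (xs i - xb) \<le> ds / 2" by (simp add: dist_norm)
      qed
    qed
    have nys: "(\<lambda>i. norm (ys i)) \<longlonglongrightarrow> 1" using tendsto_norm[OF s(4)] nv by simp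
    have ev2: "eventually (\<lambda>i. norm (ys i) > 0) sequentially" using order_tendstoD(1)[OF nys, of 0] by simp
    have ev: "eventually (\<lambda>i. inner ((1 / norm (ys i)) *\<^sub>R ys i) (xs i - xb) \<le> 2 * C * Ms * (norm (xs i - xb))\<^sup>2) sequentially"
      using ev1 ev2
    proof (rule eventually_elim2)
      fix i assume i: "norm (xs i - xb) \<le> ds / 2" "norm (ys i) > 0"
      have "(1 / norm (ys i)) *\<^sub>R ys i \<in> regular_normal_cone ?KK (xs i)"
        using s(3) by (intro reg_scale) auto
      moreover have "norm ((1 / norm (ys i)) *\<^sub>R ys i) = 1" using i(2) by simp
      ultimately show "inner ((1 / norm (ys i)) *\<^sub>R ys i) (xs i - xb) \<le> 2 * C * Ms * (norm (xs i - xb))\<^sup>2"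
        using R s(1) i(1) by blast
    qed
    have l1: "(\<lambda>i. inner ((1 / norm (ys i)) *\<^sub>R ys i) (xs i - xb)) \<longlonglongrightarrow> inner ((1 / 1) *\<^sub>R v) (x - xb)"
      using nys s(2,4) by (intro tendsto_intros) auto
    have l2: "(\<lambda>i. 2 * C * Ms * (norm (xs i - xb))\<^sup>2) \<longlonglongrightarrow> 2 * C * Ms * (norm (x - xb))\<^sup>2"
      using s(2) by (intro tendsto_intros)
    have "inner ((1 / 1) *\<^sub>R v) (x - xb) \<le> 2 * C * Ms * (norm (x - xb))\<^sup>2"
      using tendsto_le[OF _ l2 l1 ev] by simp
    then show "inner v (x - xb) \<le> 2 * C * Ms * (norm (xb - x))\<^sup>2" by (simp add: norm_minus_commute)
  qed
  have "ds / 4 > 0" "2 * C * Ms > 0" using ds \<delta>0C(2) Ms by auto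
  with main show ?thesis unfolding SOSH_def by blast
qed

end
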